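(* Let $G=(V,E)$ be a finite undirected graph with $V=\{1,\dots,p\}$. Then the following are equivalent: (i) for every symmetric positive definite $p\times p$ real matrix $A$, the thresholded matrix $A_G$ is positive definite; (ii) $G=\bigcup_{i=1}^{\tau} G_i$ for some $\tau\in\mathbb{N}$, where $G_1,\dots,G_\tau$ are pairwise disconnected complete graphs (equivalently, every connected component of $G$ is a complete graph).
   Context: For a symmetric $p\times p$ real matrix $A=(a_{ij})$ and an undirected graph $G=(V,E)$ on $V=\{1,\dots,p\}$, the matrix $A_G$ obtained by thresholding $A$ with respect to $G$ is defined by $(A_G)_{ij}=a_{ij}$ if $i=j$ or $(i,j)\in E$, and $(A_G)_{ij}=0$ otherwise. *)

theory Defs
  imports "HOL-Analysis.Analysis"
begin

text \<open>Vertices are the elements of a finite type 'n (so V has p = CARD('n) elements);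
  an undirected graph is a symmetric edge relation E on 'n.\<close>

definition sym_mat :: "real^'n^'n \<Rightarrow> bool" where
  "sym_mat A \<longleftrightarrow> transpose A = A"

definition pos_def_mat :: "real^'n^'n \<Rightarrow> bool" where
  "pos_def_mat A \<longleftrightarrow> (\<forall>x::real^'n. x \<noteq> 0 \<longrightarrow> x \<bullet> (A *v x) > 0)"

definition threshold :: "('n \<Rightarrow> 'n \<Rightarrow> bool) \<Rightarrow> real^'n^'n \<Rightarrow> real^'n^'n" where
  "threshold E A = (\<chi> i j. if i = j \<or> E i j then A $ i $ j else 0)"

definition components_complete :: "('n \<Rightarrow> 'n \<Rightarrow> bool) \<Rightarrow> bool" where
  "components_complete E \<longleftrightarrow> (\<forall>i j. E\<^sup>*\<^sup>* i j \<and> i \<noteq> j \<longrightarrow> E i j)"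

end

theory Submission
  imports Defs
begin

lemma qf: "x \<bullet> (M *v x) = (\<Sum>i\<in>UNIV. \<Sum>j\<in>UNIV. x$i * M$i$j * x$j)"
  by (simp add: inner_vec_def matrix_vector_mult_def sum_distrib_left mult.assoc)

lemma pd_nonneg: "pos_def_mat A \<Longrightarrow> 0 \<le> y \<bullet> (A *v y)"
  unfolding pos_def_mat_def by (cases "y = 0") (auto intro: less_imp_le)

lemma path_triple:
  assumes "E\<^sup>*\<^sup>* i z"
  shows "i = z \<or> E i z \<or> (\<exists>a b c. a \<noteq> b \<and> b \<noteq> c \<and> a \<noteq> c \<and> E a b \<and> E b c \<and> \<not> E a c)"
  using assms
proof (induction rule: rtranclp_induct)
  case base then show ?case by simp
next
  case (step y z)
  show ?case
  proof (cases "i = y")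
    case True then show ?thesis using step by auto
  next
    case False
    show ?thesis
    proof (cases "\<exists>a b c. a \<noteq> b \<and> b \<noteq> c \<and> a \<noteq> c \<and> E a b \<and> E b c \<and> \<not> E a c")
      case True then show ?thesis by blast
    next
      case nt: False
      with step False have Eiy: "E i y" by blast
      show ?thesis
      proof (cases "i = z \<or> E i z \<or> y = z")
        case True then show ?thesis using Eiy by auto
      next
        case False
        then have "i \<noteq> y \<and> y \<noteq> z \<and> i \<noteq> z \<and> E i y \<and> E y z \<and> \<not> E i z"
          using \<open>i \<noteq> y\<close> Eiy step by auto
        then show ?thesis by blast
      qed
    qed
  qed
qed

lemma sum3:
  fixes g :: "'n::finite \<Rightarrow> real"
  assumes "a \<noteq> b" "b \<noteq> c" "a \<noteq> c" "\<And>j. j \<notin> {a,b,c} \<Longrightarrow> g j = 0"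
  shows "(\<Sum>j\<in>UNIV. g j) = g a + g b + g c"
proof -
  have "(\<Sum>j\<in>UNIV. g j) = (\<Sum>j\<in>{a,b,c}. g j)"
    by (rule sum.mono_neutral_right) (use assms in auto)
  then show ?thesis using assms by simp
qed

theorem theorem3:
  fixes E :: "'n::finite \<Rightarrow> 'n \<Rightarrow> bool"
  assumes "symp E"
  shows "(\<forall>A::real^'n^'n. sym_mat A \<and> pos_def_mat A \<longrightarrow> pos_def_mat (threshold E A))
         \<longleftrightarrow> components_complete E"
proof
  assume H: "\<forall>A::real^'n^'n. sym_mat A \<and> pos_def_mat A \<longrightarrow> pos_def_mat (threshold E A)"
  show "components_complete E"
    unfolding components_complete_def
  proof (intro allI impI, rule ccontr)
    fix i j assume ij: "E\<^sup>*\<^sup>* i j \<and> i \<noteq> j" and nE: "\<not> E i j"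
    have "\<exists>a b c. a \<noteq> b \<and> b \<noteq> c \<and> a \<noteq> c \<and> E a b \<and> E b c \<and> \<not> E a c"
      using path_triple[of E i j] ij nE by simp
    then obtain a b c where abc: "a \<noteq> b" "b \<noteq> c" "a \<noteq> c" "E a b" "E b c" "\<not> E a c"
      by blast
    have Eba: "E b a" and Ecb: "E c b" and nEca: "\<not> E c a"
      using abc assms by (auto dest: sympD)
    define S where "S = {a,b,c}"
    define A :: "real^'n^'n" where
      "A = (\<chi> i j. (if i = j then 1/10 else 0) + (if i \<in> S \<and> j \<in> S then 1 else 0))"
    have symA: "sym_mat A"
      unfolding sym_mat_def A_def transpose_def by (simp add: vec_eq_iff)
    have pdA: "pos_def_mat A"
      unfolding pos_def_mat_def
    proof (intro allI impI)
      fix x :: "real^'n" assume "x \<noteq> 0"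
      then obtain k where k: "x$k \<noteq> 0" by (metis vec_eq_iff zero_index)
      have "x \<bullet> (A *v x) = (\<Sum>i\<in>UNIV. \<Sum>j\<in>UNIV. (if i = j then x$i * x$j / 10 else 0)
              + (if i \<in> S then x$i else 0) * (if j \<in> S then x$j else 0))"
        unfolding qf A_def by (intro sum.cong refl) (auto simp: algebra_simps)
      also have "\<dots> = (\<Sum>i\<in>UNIV. x$i * x$i / 10) + (\<Sum>i\<in>UNIV. (if i \<in> S then x$i else 0))^2"
        by (simp add: sum.distrib power2_eq_square sum_product)
      also have "\<dots> > 0"
      proof -
        have "(\<Sum>i\<in>UNIV. x$i * x$i / 10) > 0"
          by (rule sum_pos2[of UNIV k]) (use k in \<open>auto simp: zero_less_mult_iff linorder_neq_iff\<close>)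
        then show ?thesis by (smt (verit) zero_le_power2)
      qed
      finally show "x \<bullet> (A *v x) > 0" .
    qed
    have "pos_def_mat (threshold E A)" using H symA pdA by blast
    define x :: "real^'n" where "x = (\<chi> i. if i = a then 1 else if i = b then -2 else if i = c then 1 else 0)"
    have xz: "\<And>j. j \<notin> {a,b,c} \<Longrightarrow> x$j = 0" unfolding x_def by auto
    have xa: "x$a = 1" and xb: "x$b = -2" and xc: "x$c = 1" unfolding x_def using abc by auto
    have x0: "x \<noteq> 0"
    proof
      assume "x = 0" then have "x$a = 0" by simp
      then show False using xa by simp
    qed
    let ?T = "threshold E A"
    have Tv: "?T$i$j = (if i = j \<or> E i j then (if i = j then 1/10 else 0) + (if i \<in> S \<and> j \<in> S then 1 else 0) else 0)" for i j
      unfolding threshold_def A_def by simp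
    have inn: "(\<Sum>j\<in>UNIV. ?T$i$j * x$j) = ?T$i$a * x$a + ?T$i$b * x$b + ?T$i$c * x$c" for i
      by (rule sum3[OF abc(1-3)]) (simp add: xz)
    have "x \<bullet> (?T *v x) = (\<Sum>i\<in>UNIV. x$i * (\<Sum>j\<in>UNIV. ?T$i$j * x$j))"
      by (simp add: inner_vec_def matrix_vector_mult_def)
    also have "\<dots> = x$a * (?T$a$a * x$a + ?T$a$b * x$b + ?T$a$c * x$c)
                  + x$b * (?T$b$a * x$a + ?T$b$b * x$b + ?T$b$c * x$c)
                  + x$c * (?T$c$a * x$a + ?T$c$b * x$b + ?T$c$c * x$c)"
      unfolding inn by (rule sum3[OF abc(1-3)]) (simp add: xz)
    also have "\<dots> = -14/10"
      using abc Eba Ecb nEca unfolding xa xb xc Tv S_def by simp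
    finally have "x \<bullet> (?T *v x) < 0" by simp
    moreover have "x \<bullet> (?T *v x) > 0" using \<open>pos_def_mat ?T\<close> x0 unfolding pos_def_mat_def by blast
    ultimately show False by linarith
  qed
next
  assume cc: "components_complete E"
  define R where "R = {(i,j). i = j \<or> E i j}"
  have Rtrans: "(i,k) \<in> R" if "(i,j) \<in> R" "(j,k) \<in> R" for i j k
  proof -
    have "E\<^sup>*\<^sup>* i j" using that(1) unfolding R_def by auto
    moreover have "E\<^sup>*\<^sup>* j k" using that(2) unfolding R_def by auto
    ultimately have "E\<^sup>*\<^sup>* i k" by (rule rtranclp_trans)
    then show ?thesis using cc unfolding components_complete_def R_def by auto
  qed
  have Rsym: "(j,i) \<in> R" if "(i,j) \<in> R" for i j
    using that assms unfolding R_def by (auto dest: sympD)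
  have Rrefl: "(i,i) \<in> R" for i unfolding R_def by simp
  define cl where "cl i = R``{i}" for i
  have clmem: "i \<in> cl k \<longleftrightarrow> (k,i) \<in> R" for i k unfolding cl_def by simp
  have cleq: "i \<in> cl k \<Longrightarrow> cl k = cl i" for i k
    unfolding cl_def using Rtrans Rsym by blast
  define Q where "Q = range cl"
  have finQ: "finite Q" unfolding Q_def by simp
  show "\<forall>A::real^'n^'n. sym_mat A \<and> pos_def_mat A \<longrightarrow> pos_def_mat (threshold E A)"
  proof (intro allI impI)
    fix A :: "real^'n^'n" assume "sym_mat A \<and> pos_def_mat A"
    then have pd: "pos_def_mat A" by simp
    show "pos_def_mat (threshold E A)"
      unfolding pos_def_mat_def
    proof (intro allI impI)
      fix x :: "real^'n" assume "x \<noteq> 0"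
      then obtain k where k: "x$k \<noteq> 0" by (metis vec_eq_iff zero_index)
      define y where "y C = (\<chi> i. if i \<in> C then x$i else 0)" for C
      define f where "f i j = x$i * A$i$j * x$j" for i j
      have inner: "(\<Sum>C\<in>Q. (if i \<in> C \<and> j \<in> C then f i j else 0)) = (if (i,j) \<in> R then f i j else 0)" for i j
      proof -
        have "(\<Sum>C\<in>Q. (if i \<in> C \<and> j \<in> C then f i j else 0))
            = (\<Sum>C\<in>Q. (if C = cl i then (if j \<in> cl i then f i j else 0) else 0))"
        proof (intro sum.cong refl)
          fix C assume "C \<in> Q"
          then obtain m where m: "C = cl m" unfolding Q_def by auto
          show "(if i \<in> C \<and> j \<in> C then f i j else 0) = (if C = cl i then (if j \<in> cl i then f i j else 0) else 0)"
          proof -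
            have e: "i \<in> C \<longleftrightarrow> C = cl i"
            proof
              assume "i \<in> C" then show "C = cl i" using cleq[of i m] m by simp
            next
              assume "C = cl i" then show "i \<in> C" using clmem[of i i] Rrefl by simp
            qed
            show ?thesis using e by (cases "C = cl i") auto
          qed
        qed
        also have "\<dots> = (if j \<in> cl i then f i j else 0)"
          by (subst sum.delta[OF finQ]) (simp add: Q_def)
        finally show ?thesis by (simp add: clmem)
      qed
      have "x \<bullet> (threshold E A *v x) = (\<Sum>i\<in>UNIV. \<Sum>j\<in>UNIV. if (i,j) \<in> R then f i j else 0)"
        unfolding qf threshold_def f_def R_def by (intro sum.cong refl) auto
      also have "\<dots> = (\<Sum>i\<in>UNIV. \<Sum>j\<in>UNIV. \<Sum>C\<in>Q. (if i \<in> C \<and> j \<in> C then f i j else 0))"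
        by (simp add: inner)
      also have "\<dots> = (\<Sum>i\<in>UNIV. \<Sum>C\<in>Q. \<Sum>j\<in>UNIV. (if i \<in> C \<and> j \<in> C then f i j else 0))"
        by (rule sum.cong[OF refl], rule sum.swap)
      also have "\<dots> = (\<Sum>C\<in>Q. \<Sum>i\<in>UNIV. \<Sum>j\<in>UNIV. (if i \<in> C \<and> j \<in> C then f i j else 0))"
        by (rule sum.swap)
      also have "\<dots> = (\<Sum>C\<in>Q. y C \<bullet> (A *v y C))"
        unfolding qf y_def f_def by (intro sum.cong refl) auto
      also have "\<dots> > 0"
      proof (rule sum_pos2[of Q "cl k"])
        show "finite Q" by (rule finQ)
        show "cl k \<in> Q" unfolding Q_def by simp
        have "y (cl k) \<noteq> 0"
        proof
          assume "y (cl k) = 0"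
          then have "y (cl k) $ k = 0" by simp
          then show False using k Rrefl clmem unfolding y_def by auto
        qed
        then show "0 < y (cl k) \<bullet> (A *v y (cl k))" using pd unfolding pos_def_mat_def by blast
        show "\<And>C. C \<in> Q \<Longrightarrow> 0 \<le> y C \<bullet> (A *v y C)" using pd_nonneg[OF pd] by blast
      qed
      finally show "x \<bullet> (threshold E A *v x) > 0" .
    qed
  qed
qed

end
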